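(* Let $\Omega\subseteq\mathbb{R}^n$ be open, $u:\Omega\to\mathbb{R}^N$ continuous, $x\in\Omega$, $\xi\in\mathbb{S}^{N-1}$ and $(P,\mathbf{X})\in\mathbb{R}^{N\times n}\times(\mathbb{R}^N\otimes\mathbb{R}^{n\times n}_s)$. The following are equivalent: (i) $(P,\mathbf{X})\in J^{2,\xi}u(x)$; (ii) there exists an increasing $\sigma\in C^2(0,\infty)$ with $\sigma(0^+)=0$ such that, as $z\to0$, writing $Q(z):=u(z+x)-u(x)-Pz-\frac12\mathbf{X}:z\otimes z$, $$\xi^\top Q(z)\le-\frac{|\xi^\perp Q(z)|^2}{\sigma(|z|)|z|^2}+\sigma(|z|)|z|^2.$$
   Context: $\mathbb{R}^N\otimes\mathbb{R}^{n\times n}_s$ is the space of arrays $\mathbf{X}=(\mathbf{X}_{\alpha ij})$ symmetric in $i,j$; $\mathbf{X}:z\otimes z\in\mathbb{R}^N$ has components $\sum_{i,j}\mathbf{X}_{\alpha ij}z_iz_j$. For $a,b\in\mathbb{R}^N$, $a\vee b:=\frac12(a\otimes b+b\otimes a)$; matrix inequalities in the sense of quadratic forms; $\xi^\perp:=I-\xi\otimes\xi$. Second contact jet: $J^{2,\xi}u(x)$ is the set of $(P,\mathbf{X})$ for which there is a continuous $T:\mathbb{R}^n\setminus\{0\}\to\mathbb{R}^{N\times N}_s$ with $|T(y)|\to0$ as $y\to0$ and $\xi\vee[u(z)-u(x)-P(z-x)-\frac12\mathbf{X}:(z-x)\otimes(z-x)]\le|z-x|^2T(z-x)$ for all $z\ne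 x$ near $x$. *)

theory Defs
  imports "HOL-Analysis.Analysis"
begin

text \<open>An element X of R^N (x) R^{n x n}_s is represented as X :: real^'n^'n^'N with
  components X$alpha$i$j; symmetry in i,j is a separate predicate.\<close>

definition sym_tensor :: "real^'n^'n^'N \<Rightarrow> bool" where
  "sym_tensor X \<longleftrightarrow> (\<forall>a i j. X$a$i$j = X$a$j$i)"

definition tensor_quad :: "real^'n^'n^'N \<Rightarrow> real^'n \<Rightarrow> real^'N" where
  "tensor_quad X z = (\<chi> a. \<Sum>i\<in>UNIV. \<Sum>j\<in>UNIV. X$a$i$j * z$i * z$j)"

definition sym_vee :: "real^'N \<Rightarrow> real^'N \<Rightarrow> real^'N^'N" where
  "sym_vee a b = (\<chi> i j. (a$i * b$j + b$i * a$j) / 2)"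

definition qf_le :: "real^'N^'N \<Rightarrow> real^'N^'N \<Rightarrow> bool" where
  "qf_le A B \<longleftrightarrow> (\<forall>v. v \<bullet> (A *v v) \<le> v \<bullet> (B *v v))"

definition perp_mat :: "real^'N \<Rightarrow> real^'N^'N" where
  "perp_mat \<xi> = mat 1 - (\<chi> i j. \<xi>$i * \<xi>$j)"

definition contact_jet2 ::
  "(real^'n \<Rightarrow> real^'N) \<Rightarrow> real^'N \<Rightarrow> real^'n \<Rightarrow> ((real^'n^'N) \<times> (real^'n^'n^'N)) set" where
  "contact_jet2 u \<xi> x = {(P, X). \<exists>T :: real^'n \<Rightarrow> real^'N^'N.
      continuous_on (UNIV - {0}) T \<and>
      (\<forall>y. y \<noteq> 0 \<longrightarrow> transpose (T y) = T y) \<and>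
      (T \<longlongrightarrow> 0) (at 0) \<and>
      (\<forall>\<^sub>F z in at x.
         qf_le (sym_vee \<xi> (u z - u x - P *v (z - x) - (1/2) *\<^sub>R tensor_quad X (z - x)))
               ((norm (z - x))\<^sup>2 *\<^sub>R T (z - x)))}"

end

theory Submission
  imports Defs
begin


lemma int_bounds:
  fixes h :: "real \<Rightarrow> real"
  assumes "h integrable_on {s..s+c}" "c \<ge> 0" "\<And>x. x \<in> {s..s+c} \<Longrightarrow> lo \<le> h x \<and> h x \<le> hi"
  shows "c * lo \<le> integral {s..s+c} h \<and> integral {s..s+c} h \<le> c * hi"
proof -
  have "integral {s..s+c} (\<lambda>x. lo) \<le> integral {s..s+c} h"
    by (rule integral_le) (use assms in auto)
  moreover have "integral {s..s+c} h \<le> integral {s..s+c} (\<lambda>x. hi)"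
    by (rule integral_le) (use assms in auto)
  ultimately show ?thesis using assms(2) by simp
qed

lemma int_shift_deriv:
  fixes h :: "real \<Rightarrow> real"
  assumes "continuous_on UNIV h" "c \<ge> 0"
  shows "((\<lambda>s. integral {s..s+c} h) has_real_derivative (h (t+c) - h t)) (at t)"
proof -
  define a where "a = t - 1"
  define b where "b = t + c + 1"
  define \<Psi> where "\<Psi> = (\<lambda>u. integral {a..u} h)"
  have cont: "continuous_on {a..b} h" using assms(1) continuous_on_subset by blast
  have dd: "(\<Psi> has_real_derivative h u) (at u)" if "a < u" "u < b" for u
  proof -
    have "(\<Psi> has_real_derivative h u) (at u within {a..b})"
      unfolding \<Psi>_def by (rule integral_has_real_derivative[OF cont]) (use that in auto)
    moreover have "at u within {a..b} = at u"
      by (rule at_within_interior) (use that in auto)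
    ultimately show ?thesis by simp
  qed
  have d1: "((\<lambda>s. \<Psi> (s + c)) has_real_derivative h (t+c)) (at t)"
    using dd[of "t+c"] assms(2) unfolding a_def b_def DERIV_shift by auto
  have d2: "(\<Psi> has_real_derivative h t) (at t)"
    using dd[of t] assms(2) unfolding a_def b_def by auto
  have d: "((\<lambda>s. \<Psi> (s + c) - \<Psi> s) has_real_derivative (h (t+c) - h t)) (at t)"
    by (rule DERIV_diff[OF d1 d2])
  show ?thesis
  proof (rule has_field_derivative_transform_within_open[OF d, of "{t-1<..<t+1}"])
    fix s assume s: "s \<in> {t-1<..<t+1}"
    have "h integrable_on {a..s+c}"
      by (rule integrable_continuous_real) (rule continuous_on_subset[OF assms(1)], auto)
    then have "integral {a..s} h + integral {s..s+c} h = integral {a..s+c} h"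
      by (intro Henstock_Kurzweil_Integration.integral_combine) (use s assms(2) a_def in auto)
    then show "\<Psi> (s + c) - \<Psi> s = integral {s..s + c} h" unfolding \<Psi>_def by simp
  qed auto
qed

lemma int_shift_cont:
  fixes h :: "real \<Rightarrow> real"
  assumes "\<And>a b. h integrable_on {a..b}"
  shows "continuous_on UNIV (\<lambda>s. integral {s..s+1} h)"
proof -
  have "isCont (\<lambda>s. integral {s..s+1} h) t" for t
  proof -
    define a where "a = t - 1"
    define \<Psi> where "\<Psi> = (\<lambda>u. integral {a..u} h)"
    have c: "continuous_on {a..t+3} \<Psi>" unfolding \<Psi>_def
      by (rule indefinite_integral_continuous_1[OF assms])
    have c1: "isCont \<Psi> u" if "a < u" "u < t+3" for u
      by (rule continuous_on_interior[OF c]) (use that in auto)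
    have i1: "isCont \<Psi> (t+1)" using c1[of "t+1"] unfolding a_def by auto
    have i2: "isCont \<Psi> t" using c1[of t] unfolding a_def by auto
    have i3: "isCont (\<lambda>s. s + 1) t" by simp
    have i4: "isCont (\<lambda>s. \<Psi> (s + 1)) t"
      using continuous_at_compose[OF i3, of \<Psi>] i1 by (simp add: o_def)
    have cc: "isCont (\<lambda>s. \<Psi> (s + 1) - \<Psi> s) t"
      using isCont_diff[OF i4 i2] by simp
    have ev0: "eventually (\<lambda>s. s \<in> {t-1<..<t+1}) (nhds t)"
      by (rule eventually_nhds_in_open) auto
    have ev: "eventually (\<lambda>s. integral {s..s+1} h = \<Psi> (s + 1) - \<Psi> s) (nhds t)"
    proof (rule eventually_mono[OF ev0])
        fix s assume s: "s \<in> {t-1<..<t+1}"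
        have "integral {a..s} h + integral {s..s+1} h = integral {a..s+1} h"
          by (intro Henstock_Kurzweil_Integration.integral_combine assms) (use s a_def in auto)
        then show "integral {s..s+1} h = \<Psi> (s + 1) - \<Psi> s" unfolding \<Psi>_def by simp
    qed
    show ?thesis using isCont_cong[OF ev] cc by simp
  qed
  then show ?thesis by (simp add: continuous_at_imp_continuous_on)
qed


lemma smooth_majorant:
  fixes g :: "real \<Rightarrow> real"
  assumes gmono: "mono_on {0<..} g" and gpos: "\<forall>r>0. 0 < g r"
    and glim: "(g \<longlongrightarrow> 0) (at_right 0)"
  shows "\<exists>\<sigma> :: real \<Rightarrow> real. mono_on {0<..} \<sigma> \<and> (\<forall>t>0. \<sigma> t > 0) \<and>
       (\<exists>\<sigma>' \<sigma>''. (\<forall>t>0. (\<sigma> has_real_derivative \<sigma>' t) (at t)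
                          \<and> (\<sigma>' has_real_derivative \<sigma>'' t) (at t))
                 \<and> continuous_on {0<..} \<sigma>'') \<and>
       (\<sigma> \<longlongrightarrow> 0) (at_right 0) \<and> (\<forall>r>0. g r \<le> \<sigma> r)"
proof -
  define f where "f = (\<lambda>s. g (exp s))"
  have fmono: "f x \<le> f y" if "x \<le> y" for x y
    unfolding f_def using that by (intro mono_onD[OF gmono]) auto
  have fpos: "0 < f s" for s unfolding f_def using gpos by auto
  have fint: "f integrable_on {a..b}" for a b
    by (rule integrable_on_mono_on) (auto intro: mono_onI fmono)
  define F1 where "F1 = (\<lambda>s. integral {s..s+1} f)"
  have F1b: "f s \<le> F1 s \<and> F1 s \<le> f (s+1)" for s
  proof -
    have "f s \<le> f x \<and> f x \<le> f (s+1)" if "x \<in> {s..s+1}" for x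
      using that by (auto intro!: fmono)
    from int_bounds[of f s 1, OF fint _ this] show ?thesis unfolding F1_def by simp
  qed
  have F1c: "continuous_on UNIV F1" unfolding F1_def by (rule int_shift_cont[OF fint])
  define F2 where "F2 = (\<lambda>s. integral {s..s+1} F1)"
  have F2d: "(F2 has_real_derivative (F1 (s+1) - F1 s)) (at s)" for s
    unfolding F2_def by (rule int_shift_deriv[OF F1c]) simp
  have F1int: "F1 integrable_on {a..b}" for a b
    by (rule integrable_continuous_real) (rule continuous_on_subset[OF F1c], auto)
  have F2b: "f s \<le> F2 s \<and> F2 s \<le> f (s+2)" for s
  proof -
    have "f s \<le> F1 x \<and> F1 x \<le> f (s+2)" if x: "x \<in> {s..s+1}" for x
    proof -
      have "f s \<le> f x" using x by (auto intro!: fmono)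
      moreover have "f (x+1) \<le> f (s+2)" using x by (auto intro!: fmono)
      ultimately show ?thesis using F1b[of x] by linarith
    qed
    from int_bounds[of F1 s 1, OF F1int _ this] show ?thesis unfolding F2_def by simp
  qed
  have F2dpos: "F1 (s+1) - F1 s \<ge> 0" for s
    using F1b[of s] F1b[of "s+1"] by simp
  have F2c: "continuous_on UNIV F2"
    using F2d by (meson DERIV_isCont continuous_at_imp_continuous_on)
  have F2mono: "F2 x \<le> F2 y" if "x \<le> y" for x y
  proof (rule DERIV_nonneg_imp_increasing_open[OF that])
    fix z show "\<exists>y. (F2 has_real_derivative y) (at z) \<and> y \<ge> 0" using F2d F2dpos by blast
  next
    show "continuous_on {x..y} F2" using F2c continuous_on_subset by blast
  qed
  define F3 where "F3 = (\<lambda>s. integral {s..s+2} F2)"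
  define D where "D = (\<lambda>s. F2 (s+2) - F2 s)"
  define D2 where "D2 = (\<lambda>s. (F1 (s+3) - F1 (s+2)) - (F1 (s+1) - F1 s))"
  have F3d: "(F3 has_real_derivative D s) (at s)" for s
    unfolding F3_def D_def by (rule int_shift_deriv[OF F2c]) simp
  have Dd: "(D has_real_derivative D2 s) (at s)" for s
  proof -
    have "((\<lambda>s. F2 (s+2)) has_real_derivative (F1 (s+2+1) - F1 (s+2))) (at s)"
      using F2d[of "s+2"] unfolding DERIV_shift .
    from DERIV_diff[OF this F2d[of s]] show ?thesis
      unfolding D_def D2_def by (simp add: algebra_simps)
  qed
  have Dc: "continuous_on UNIV D"
    using Dd by (meson DERIV_isCont continuous_at_imp_continuous_on)
  have D2c: "continuous_on UNIV D2" unfolding D2_def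
    by (intro continuous_intros continuous_on_compose2[OF F1c]) auto
  have Dpos: "D s \<ge> 0" for s unfolding D_def using F2mono[of s "s+2"] by simp
  have F2int: "F2 integrable_on {a..b}" for a b
    by (rule integrable_continuous_real) (rule continuous_on_subset[OF F2c], auto)
  have F3b: "2 * f s \<le> F3 s \<and> F3 s \<le> 2 * f (s+4)" for s
  proof -
    have "\<And>x. x \<in> {s..s+2} \<Longrightarrow> f s \<le> F2 x \<and> F2 x \<le> f (s+4)"
    proof -
      fix x assume x: "x \<in> {s..s+2}"
      have "f s \<le> f x" using x by (auto intro!: fmono)
      moreover have "f (x+2) \<le> f (s+4)" using x by (auto intro!: fmono)
      ultimately show "f s \<le> F2 x \<and> F2 x \<le> f (s+4)" using F2b[of x] by linarith
    qed
    from int_bounds[of F2 s 2, OF F2int _ this] show ?thesis unfolding F3_def by simp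
  qed
  have F3c: "continuous_on UNIV F3"
    using F3d by (meson DERIV_isCont continuous_at_imp_continuous_on)
  have F3mono: "F3 x \<le> F3 y" if "x \<le> y" for x y
  proof (rule DERIV_nonneg_imp_increasing_open[OF that])
    fix z show "\<exists>y. (F3 has_real_derivative y) (at z) \<and> y \<ge> 0" using F3d Dpos by blast
  next
    show "continuous_on {x..y} F3" using F3c continuous_on_subset by blast
  qed
  define \<sigma> where "\<sigma> = (\<lambda>r. F3 (ln r))"
  define \<sigma>' where "\<sigma>' = (\<lambda>r. D (ln r) / r)"
  define \<sigma>'' where "\<sigma>'' = (\<lambda>r. (D2 (ln r) - D (ln r)) / r^2)"
  have d1: "(\<sigma> has_real_derivative \<sigma>' r) (at r)" if "r > 0" for r
  proof -
    have "((\<lambda>r. F3 (ln r)) has_real_derivative D (ln r) * inverse r) (at r)"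
      by (rule DERIV_chain2[OF F3d DERIV_ln[OF that]])
    then show ?thesis unfolding \<sigma>_def \<sigma>'_def by (simp add: field_simps)
  qed
  have d2: "(\<sigma>' has_real_derivative \<sigma>'' r) (at r)" if "r > 0" for r
  proof -
    have a: "((\<lambda>r. D (ln r)) has_real_derivative D2 (ln r) * inverse r) (at r)"
      by (rule DERIV_chain2[OF Dd DERIV_ln[OF that]])
    have "((\<lambda>r. D (ln r) / r) has_real_derivative
            ((D2 (ln r) * inverse r) * r - D (ln r) * 1) / (r * r)) (at r)"
      by (rule DERIV_divide[OF a DERIV_ident]) (use that in simp)
    then show ?thesis unfolding \<sigma>'_def \<sigma>''_def using that
      by (simp add: field_simps power2_eq_square)
  qed
  have c2: "continuous_on {0<..} \<sigma>''" unfolding \<sigma>''_def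
    by (intro continuous_intros continuous_on_compose2[OF D2c] continuous_on_compose2[OF Dc]) auto
  have smono: "mono_on {0<..} \<sigma>" unfolding \<sigma>_def
    by (rule mono_onI) (auto intro!: F3mono)
  have sge: "g r \<le> \<sigma> r \<and> 2 * g r \<le> \<sigma> r \<and> \<sigma> r \<le> 2 * g (exp 4 * r)" if "r > 0" for r
    using F3b[of "ln r"] that gpos unfolding \<sigma>_def f_def by (auto simp: exp_add mult.commute)
  have spos: "\<forall>t>0. \<sigma> t > 0" using sge gpos by (meson less_le_trans)
  have lim4: "((\<lambda>r. g (exp 4 * r)) \<longlongrightarrow> 0) (at_right 0)"
  proof (rule filterlim_compose[OF glim])
    show "filterlim (\<lambda>r. exp 4 * r) (at_right 0) (at_right (0::real))"
    proof (subst filterlim_at, intro conjI)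
      show "\<forall>\<^sub>F x in at_right (0::real). exp 4 * x \<in> {0<..} \<and> exp 4 * x \<noteq> 0"
        using eventually_at_right_less[of "0::real"] by eventually_elim simp
      show "((\<lambda>x. exp 4 * x) \<longlongrightarrow> 0) (at_right (0::real))"
        by (rule tendsto_eq_intros) (auto intro: tendsto_eq_intros)
    qed
  qed
  have slim: "(\<sigma> \<longlongrightarrow> 0) (at_right 0)"
  proof (rule tendsto_sandwich[of "\<lambda>_. 0" _ _ "\<lambda>r. 2 * g (exp 4 * r)"])
    show "\<forall>\<^sub>F n in at_right 0. 0 \<le> \<sigma> n"
      using eventually_at_right_less[of 0] by eventually_elim (use spos in auto)
    show "\<forall>\<^sub>F n in at_right 0. \<sigma> n \<le> 2 * g (exp 4 * n)"
      using eventually_at_right_less[of 0] by eventually_elim (use sge in auto)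
    show "((\<lambda>r. 2 * g (exp 4 * r)) \<longlongrightarrow> 0) (at_right 0)"
      using tendsto_mult[OF tendsto_const lim4, of 2] by simp
  qed simp
  show ?thesis
    apply (rule exI[of _ \<sigma>])
    using smono spos slim sge d1 d2 c2 by blast
qed



lemma vee_quad: "v \<bullet> (sym_vee a b *v v) = (a \<bullet> v) * (b \<bullet> v)"
proof -
  have "v \<bullet> (sym_vee a b *v v) = (\<Sum>i\<in>UNIV. \<Sum>j\<in>UNIV. v$i * ((a$i * b$j + b$i * a$j) / 2) * v$j)"
    by (simp add: sym_vee_def matrix_vector_mult_def inner_vec_def sum_distrib_left mult.assoc)
  also have "\<dots> = ((\<Sum>i\<in>UNIV. \<Sum>j\<in>UNIV. (a$i * v$i) * (b$j * v$j))
                   + (\<Sum>i\<in>UNIV. \<Sum>j\<in>UNIV. (b$i * v$i) * (a$j * v$j))) / 2"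
    by (simp add: sum_divide_distrib sum.distrib[symmetric] algebra_simps add_divide_distrib)
  also have "(\<Sum>i\<in>UNIV. \<Sum>j\<in>UNIV. (b$i * v$i) * (a$j * v$j)) = (\<Sum>i\<in>UNIV. \<Sum>j\<in>UNIV. (a$i * v$i) * (b$j * v$j))"
    by (subst sum.swap) (simp add: mult.commute)
  also have "(\<Sum>i\<in>UNIV. \<Sum>j\<in>UNIV. (a$i * v$i) * (b$j * v$j)) = (a \<bullet> v) * (b \<bullet> v)"
    by (simp add: inner_vec_def sum_product)
  finally show ?thesis by simp
qed

lemma smat_quad: "v \<bullet> ((c *\<^sub>R M) *v v) = c * (v \<bullet> (M *v v))" for M :: "real^'N^'N"
  by (simp flip: scaleR_matrix_vector_assoc)

lemma id_quad: "v \<bullet> ((c *\<^sub>R (mat 1 :: real^'N^'N)) *v v) = c * (norm v)\<^sup>2"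
  by (simp add: smat_quad power2_norm_eq_inner)

lemma perp_apply: "perp_mat \<xi> *v q = q - (\<xi> \<bullet> q) *\<^sub>R \<xi>"
proof -
  have "(\<chi> i j. \<xi>$i * \<xi>$j) *v q = (\<xi> \<bullet> q) *\<^sub>R \<xi>"
    by (simp add: vec_eq_iff matrix_vector_mult_def inner_vec_def sum_distrib_left mult_ac)
  then show ?thesis by (simp add: perp_mat_def matrix_vector_mult_diff_rdistrib)
qed

lemma quad_bound: "v \<bullet> (M *v v) \<le> (\<Sum>i\<in>UNIV. \<Sum>j\<in>UNIV. \<bar>M $ i $ j\<bar>) * (norm v)\<^sup>2"
  for M :: "real^'N^'N"
proof -
  have "v \<bullet> (M *v v) \<le> norm v * norm (M *v v)"
    using Cauchy_Schwarz_ineq2[of v "M *v v"] by linarith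
  also have "norm (M *v v) \<le> onorm ((*v) M) * norm v"
    by (rule onorm) simp
  also have "onorm ((*v) M) \<le> (\<Sum>i\<in>UNIV. \<Sum>j\<in>UNIV. \<bar>M $ i $ j\<bar>)"
    by (rule onorm_le_matrix_component_sum)
  finally show ?thesis
    by (simp add: power2_eq_square mult_left_mono mult_right_mono mult.assoc mult.left_commute)
qed

lemma real_fwd:
  fixes al a c K W p :: real
  assumes "K > 0" "\<bar>c\<bar> \<le> W * p" "W \<ge> 0" "p \<ge> 0" "a \<le> - (W\<^sup>2 / K) + K"
  shows "al * (a * al + c) \<le> K * (al\<^sup>2 + p\<^sup>2)"
proof -
  have h1: "al\<^sup>2 * a \<le> al\<^sup>2 * (K - W\<^sup>2 / K)"
    using assms(5) by (intro mult_left_mono) auto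
  have "al * c \<le> \<bar>al\<bar> * (W * p)"
    by (metis abs_ge_self abs_mult assms(2) abs_ge_zero mult_left_mono order_trans)
  moreover have "\<bar>al\<bar> * (W * p) \<le> al\<^sup>2 * W\<^sup>2 / K + K * p\<^sup>2 / 4"
  proof -
    have "0 \<le> (\<bar>al\<bar> * W - K * p / 2)\<^sup>2" by simp
    then have "K * (\<bar>al\<bar> * (W * p)) \<le> al\<^sup>2 * W\<^sup>2 + K * K * p\<^sup>2 / 4"
      by (simp add: power2_eq_square algebra_simps)
    then show ?thesis using assms(1)
      by (simp add: field_simps power2_eq_square)
  qed
  ultimately have h2: "al * c \<le> al\<^sup>2 * W\<^sup>2 / K + K * p\<^sup>2 / 4" by linarith
  have "al * (a * al + c) = al\<^sup>2 * a + al * c" by (simp add: power2_eq_square algebra_simps)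
  also have "\<dots> \<le> al\<^sup>2 * (K - W\<^sup>2 / K) + (al\<^sup>2 * W\<^sup>2 / K + K * p\<^sup>2 / 4)"
    using h1 h2 by linarith
  also have "\<dots> = K * al\<^sup>2 + K * p\<^sup>2 / 4" by (simp add: algebra_simps)
  also have "\<dots> \<le> K * (al\<^sup>2 + p\<^sup>2)" using assms(1) by (simp add: algebra_simps)
  finally show ?thesis .
qed

lemma fwd:
  fixes \<xi> q v :: "'a::real_inner"
  assumes "norm \<xi> = 1" "K > 0" "\<xi> \<bullet> q \<le> - ((norm (q - (\<xi> \<bullet> q) *\<^sub>R \<xi>))\<^sup>2 / K) + K"
  shows "(\<xi> \<bullet> v) * (q \<bullet> v) \<le> K * (norm v)\<^sup>2"
proof -
  define a where "a = \<xi> \<bullet> q"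
  define w where "w = q - a *\<^sub>R \<xi>"
  define al where "al = \<xi> \<bullet> v"
  define p where "p = v - al *\<^sub>R \<xi>"
  have xx: "\<xi> \<bullet> \<xi> = 1" using assms(1) by (simp add: norm_eq_sqrt_inner)
  have wx: "w \<bullet> \<xi> = 0"
  proof -
    have "w \<bullet> \<xi> = q \<bullet> \<xi> - a * (\<xi> \<bullet> \<xi>)" unfolding w_def by (simp add: inner_diff_left)
    then show ?thesis using xx by (simp add: a_def inner_commute)
  qed
  have px: "p \<bullet> \<xi> = 0"
  proof -
    have "p \<bullet> \<xi> = v \<bullet> \<xi> - al * (\<xi> \<bullet> \<xi>)" unfolding p_def by (simp add: inner_diff_left)
    then show ?thesis using xx by (simp add: al_def inner_commute)
  qed
  have qv: "q \<bullet> v = a * al + w \<bullet> p"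
  proof -
    have "q = w + a *\<^sub>R \<xi>" "v = p + al *\<^sub>R \<xi>" unfolding w_def p_def by simp_all
    then have "q \<bullet> v = (w + a *\<^sub>R \<xi>) \<bullet> (p + al *\<^sub>R \<xi>)" by simp
    also have "\<dots> = w \<bullet> p + al * (w \<bullet> \<xi>) + a * (\<xi> \<bullet> p) + a * al * (\<xi> \<bullet> \<xi>)"
      by (simp add: inner_add_left inner_add_right algebra_simps)
    finally show ?thesis using wx px xx by (simp add: inner_commute)
  qed
  have nv: "(norm v)\<^sup>2 = al\<^sup>2 + (norm p)\<^sup>2"
  proof -
    have "v = p + al *\<^sub>R \<xi>" unfolding p_def by simp
    then have "(norm v)\<^sup>2 = (p + al *\<^sub>R \<xi>) \<bullet> (p + al *\<^sub>R \<xi>)" by (simp add: power2_norm_eq_inner)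
    also have "\<dots> = p \<bullet> p + 2 * al * (p \<bullet> \<xi>) + al * al * (\<xi> \<bullet> \<xi>)"
      by (simp add: inner_add_left inner_add_right algebra_simps inner_commute)
    moreover have "p \<bullet> p = norm p * norm p" by (metis power2_norm_eq_inner power2_eq_square)
    ultimately show ?thesis using px xx by (simp add: power2_eq_square)
  qed
  have "al * (a * al + w \<bullet> p) \<le> K * (al\<^sup>2 + (norm p)\<^sup>2)"
    by (rule real_fwd[where W="norm w"]) (use assms Cauchy_Schwarz_ineq2 w_def a_def in auto)
  then show ?thesis using qv nv al_def by simp
qed

lemma bwd:
  fixes \<xi> q :: "'a::real_inner"
  assumes "norm \<xi> = 1" "K > 0" "4 * e \<le> K" "e \<ge> 0"
    and hv: "\<And>v. (\<xi> \<bullet> v) * (q \<bullet> v) \<le> e * (norm v)\<^sup>2"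
  shows "\<xi> \<bullet> q \<le> - ((norm (q - (\<xi> \<bullet> q) *\<^sub>R \<xi>))\<^sup>2 / K) + K"
proof -
  define a where "a = \<xi> \<bullet> q"
  define w where "w = q - a *\<^sub>R \<xi>"
  define W where "W = (norm w)\<^sup>2"
  have xx: "\<xi> \<bullet> \<xi> = 1" using assms(1) by (simp add: norm_eq_sqrt_inner)
  have wx: "w \<bullet> \<xi> = 0"
  proof -
    have "w \<bullet> \<xi> = q \<bullet> \<xi> - a * (\<xi> \<bullet> \<xi>)" unfolding w_def by (simp add: inner_diff_left)
    then show ?thesis using xx by (simp add: a_def inner_commute)
  qed
  have wq: "w \<bullet> q = W"
  proof -
    have "q = w + a *\<^sub>R \<xi>" unfolding w_def by simp
    then have "w \<bullet> q = w \<bullet> (w + a *\<^sub>R \<xi>)" by simp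
    then show ?thesis using wx by (simp add: inner_add_right W_def power2_norm_eq_inner)
  qed
  define v where "v = \<xi> + (2 / K) *\<^sub>R w"
  have "\<xi> \<bullet> v = 1" unfolding v_def using wx xx by (simp add: inner_add_right inner_commute)
  moreover have "q \<bullet> v = a + (2 / K) * W" unfolding v_def a_def
    using wq by (simp add: inner_add_right inner_commute)
  moreover have "(norm v)\<^sup>2 = 1 + (4 / K\<^sup>2) * W"
  proof -
    have "(norm v)\<^sup>2 = v \<bullet> v" by (simp add: power2_norm_eq_inner)
    also have "\<dots> = \<xi> \<bullet> \<xi> + 2 * (2 / K) * (w \<bullet> \<xi>) + (2/K) * (2/K) * (w \<bullet> w)"
      unfolding v_def by (simp add: inner_add_left inner_add_right algebra_simps inner_commute)
    moreover have "w \<bullet> w = W" unfolding W_def by (metis power2_norm_eq_inner)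
    ultimately show ?thesis using xx wx by (simp add: power2_eq_square)
  qed
  ultimately have h: "a + (2 / K) * W \<le> e * (1 + (4 / K\<^sup>2) * W)" using hv[of v] by simp
  have W0: "W \<ge> 0" unfolding W_def by simp
  have "e * (4 / K\<^sup>2) * W \<le> W / K"
  proof -
    have "e * (4 / K\<^sup>2) = (4 * e) / K / K" by (simp add: power2_eq_square)
    also have "\<dots> \<le> K / K / K" using assms(2,3) by (intro divide_right_mono) auto
    also have "\<dots> = 1 / K" using assms(2) by simp
    finally show ?thesis using W0 by (metis mult_right_mono times_divide_eq_left mult_1)
  qed
  moreover have t: "(2 / K) * W = 2 * (W / K)" by simp
  moreover have t2: "e * (1 + (4 / K\<^sup>2) * W) = e + e * (4 / K\<^sup>2) * W" by (simp add: algebra_simps)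
  ultimately have "a \<le> e - W / K" using h by linarith
  moreover have "e \<le> K" using assms(3,4) by linarith
  ultimately show ?thesis unfolding a_def W_def w_def by simp
qed



theorem theorem27:
  fixes \<Omega> :: "(real^'n) set" and u :: "real^'n \<Rightarrow> real^'N"
    and x :: "real^'n" and \<xi> :: "real^'N"
    and P :: "real^'n^'N" and X :: "real^'n^'n^'N"
  assumes "open \<Omega>" and "continuous_on \<Omega> u" and "x \<in> \<Omega>"
    and "norm \<xi> = 1" and "sym_tensor X"
  shows "(P, X) \<in> contact_jet2 u \<xi> x \<longleftrightarrow>
    (\<exists>\<sigma> :: real \<Rightarrow> real.
       mono_on {0<..} \<sigma> \<and>
       (\<forall>t>0. \<sigma> t > 0) \<and>
       (\<exists>\<sigma>' \<sigma>''. (\<forall>t>0. (\<sigma> has_real_derivative \<sigma>' t) (at t)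
                          \<and> (\<sigma>' has_real_derivative \<sigma>'' t) (at t))
                 \<and> continuous_on {0<..} \<sigma>'') \<and>
       (\<sigma> \<longlongrightarrow> 0) (at_right 0) \<and>
       (\<forall>\<^sub>F z in at 0.
          (let Q = u (z + x) - u x - P *v z - (1/2) *\<^sub>R tensor_quad X z in
           \<xi> \<bullet> Q \<le> - ((norm (perp_mat \<xi> *v Q))\<^sup>2 / (\<sigma> (norm z) * (norm z)\<^sup>2))
                     + \<sigma> (norm z) * (norm z)\<^sup>2)))"
    (is "?L \<longleftrightarrow> ?R")
proof
  define Qf where "Qf = (\<lambda>z. u (z + x) - u x - P *v z - (1/2) *\<^sub>R tensor_quad X z)"
  have nz: "\<forall>\<^sub>F z in at (0::real^'n). z \<noteq> 0"
    by (simp add: eventually_at_filter)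
  {
    assume ?L
    then obtain T :: "real^'n \<Rightarrow> real^'N^'N" where
      Tlim: "(T \<longlongrightarrow> 0) (at 0)" and
      ev: "\<forall>\<^sub>F z in at x.
         qf_le (sym_vee \<xi> (u z - u x - P *v (z - x) - (1/2) *\<^sub>R tensor_quad X (z - x)))
               ((norm (z - x))\<^sup>2 *\<^sub>R T (z - x))"
      unfolding contact_jet2_def by blast
    have ev0: "\<forall>\<^sub>F z in at 0. qf_le (sym_vee \<xi> (Qf z)) ((norm z)\<^sup>2 *\<^sub>R T z)"
      using ev unfolding at_to_0[of x] eventually_filtermap Qf_def by simp
    define t where "t = (\<lambda>z. \<Sum>i\<in>UNIV. \<Sum>j\<in>UNIV. \<bar>T z $ i $ j\<bar>)"
    have t0: "t z \<ge> 0" for z unfolding t_def by (simp add: sum_nonneg)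
    have tlim: "(t \<longlongrightarrow> 0) (at 0)" unfolding t_def
    proof (intro tendsto_null_sum tendsto_rabs_zero)
      fix i j
      have "((\<lambda>z. T z $ i) \<longlongrightarrow> 0 $ i) (at 0)" by (rule tendsto_vec_nth[OF Tlim])
      then have "((\<lambda>z. T z $ i $ j) \<longlongrightarrow> 0 $ i $ j) (at 0)" by (rule tendsto_vec_nth)
      then show "((\<lambda>z. T z $ i $ j) \<longlongrightarrow> 0) (at 0)" by simp
    qed
    have tsmall: "\<exists>d>0. \<forall>z. z \<noteq> 0 \<and> norm z < d \<longrightarrow> t z < e" if "e > 0" for e
    proof -
      have "\<forall>\<^sub>F z in at 0. dist (t z) 0 < e" by (rule tendstoD[OF tlim that])
      then obtain d where "d > 0" "\<forall>z\<in>UNIV. z \<noteq> 0 \<and> dist z 0 < d \<longrightarrow> dist (t z) 0 < e"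
        unfolding eventually_at by blast
      then show ?thesis by (intro exI[of _ d]) auto
    qed
    obtain d0 where d0: "d0 > 0" "\<forall>z. z \<noteq> 0 \<and> norm z < d0 \<longrightarrow> t z < 1"
      using tsmall[of 1] by auto
    define r1 where "r1 = d0 / 2"
    have r1: "r1 > 0" "r1 < d0" using d0 unfolding r1_def by auto
    define S where "S = (\<lambda>r. insert 0 {t z | z. z \<noteq> 0 \<and> norm z \<le> min r r1})"
    define m where "m = (\<lambda>r. Sup (S r))"
    have Sne: "S r \<noteq> {}" for r unfolding S_def by simp
    have Sbdd: "bdd_above (S r)" for r
    proof (rule bdd_aboveI[of _ 1])
      fix s assume "s \<in> S r"
      then obtain z where "s = 0 \<or> (s = t z \<and> z \<noteq> 0 \<and> norm z \<le> min r r1)"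
        unfolding S_def by auto
      then show "s \<le> 1"
      proof
        assume "s = 0" then show ?thesis by simp
      next
        assume h: "s = t z \<and> z \<noteq> 0 \<and> norm z \<le> min r r1"
        then have "norm z < d0" using r1 by auto
        then show ?thesis using h d0(2) by force
      qed
    qed
    have m_ge: "t z \<le> m r" if "z \<noteq> 0" "norm z \<le> min r r1" for z r
      unfolding m_def by (rule cSup_upper[OF _ Sbdd]) (use that S_def in auto)
    have m0: "0 \<le> m r" for r
      unfolding m_def by (rule cSup_upper[OF _ Sbdd]) (simp add: S_def)
    have m_mono: "m r \<le> m r'" if "r \<le> r'" for r r'
      unfolding m_def by (rule cSup_subset_mono[OF Sne Sbdd]) (use that S_def in auto)
    have m_lim: "(m \<longlongrightarrow> 0) (at_right 0)"
    proof (rule tendstoI)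
      fix e :: real assume e: "e > 0"
      then obtain d where d: "d > 0" "\<forall>z. z \<noteq> 0 \<and> norm z < d \<longrightarrow> t z < e/2"
        using tsmall[of "e/2"] by auto
      have "m y \<le> e/2" if "0 < y" "y < d" for y
        unfolding m_def
      proof (rule cSup_least[OF Sne])
        fix s assume "s \<in> S y"
        then show "s \<le> e/2" unfolding S_def using d that e by auto
      qed
      then show "\<forall>\<^sub>F y in at_right 0. dist (m y) 0 < e"
        unfolding eventually_at_right_field using d m0 e
        by (intro exI[of _ d]) (auto, smt (verit))
    qed
    define g where "g = (\<lambda>r. 4 * m r + r)"
    have "\<exists>\<sigma> :: real \<Rightarrow> real. mono_on {0<..} \<sigma> \<and> (\<forall>t>0. \<sigma> t > 0) \<and>
       (\<exists>\<sigma>' \<sigma>''. (\<forall>t>0. (\<sigma> has_real_derivative \<sigma>' t) (at t)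
                          \<and> (\<sigma>' has_real_derivative \<sigma>'' t) (at t))
                 \<and> continuous_on {0<..} \<sigma>'') \<and>
       (\<sigma> \<longlongrightarrow> 0) (at_right 0) \<and> (\<forall>r>0. g r \<le> \<sigma> r)"
    proof (rule smooth_majorant)
      show "mono_on {0<..} g" unfolding g_def
        by (rule mono_onI) (use m_mono in \<open>auto intro!: add_mono\<close>)
      show "\<forall>r>0. 0 < g r" unfolding g_def using m0 by (auto intro: add_nonneg_pos)
      have "((\<lambda>r. 4 * m r + r) \<longlongrightarrow> 4 * 0 + 0) (at_right 0)"
        by (intro tendsto_intros m_lim)
      then show "(g \<longlongrightarrow> 0) (at_right 0)" unfolding g_def by simp
    qed
    then obtain \<sigma> :: "real \<Rightarrow> real" where
      sig: "mono_on {0<..} \<sigma>" "\<forall>t>0. \<sigma> t > 0"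
        "\<exists>\<sigma>' \<sigma>''. (\<forall>t>0. (\<sigma> has_real_derivative \<sigma>' t) (at t)
                          \<and> (\<sigma>' has_real_derivative \<sigma>'' t) (at t))
                 \<and> continuous_on {0<..} \<sigma>''"
        "(\<sigma> \<longlongrightarrow> 0) (at_right 0)" and gs: "\<forall>r>0. g r \<le> \<sigma> r"
      by blast
    have small: "\<forall>\<^sub>F z in at (0::real^'n). norm z < r1"
      unfolding eventually_at using r1 by (intro exI[of _ r1]) auto
    have "\<forall>\<^sub>F z in at 0. \<xi> \<bullet> Qf z \<le> - ((norm (perp_mat \<xi> *v Qf z))\<^sup>2 / (\<sigma> (norm z) * (norm z)\<^sup>2))
                     + \<sigma> (norm z) * (norm z)\<^sup>2"
      using ev0 nz small
    proof eventually_elim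
      case (elim z)
      define e where "e = (norm z)\<^sup>2 * t z"
      define K where "K = \<sigma> (norm z) * (norm z)\<^sup>2"
      have zpos: "norm z > 0" using elim by simp
      have Kpos: "K > 0" unfolding K_def using sig(2) zpos by simp
      have e0: "e \<ge> 0" unfolding e_def using t0 by simp
      have "4 * t z \<le> \<sigma> (norm z)"
      proof -
        have "t z \<le> m (norm z)" by (rule m_ge) (use elim in auto)
        moreover have "g (norm z) \<le> \<sigma> (norm z)" using gs zpos by auto
        ultimately show ?thesis unfolding g_def using zpos by linarith
      qed
      then have e4: "4 * e \<le> K" unfolding e_def K_def
        using mult_left_mono[of "4 * t z" "\<sigma> (norm z)" "(norm z)\<^sup>2"] by (simp add: mult_ac)
      have hv: "(\<xi> \<bullet> v) * (Qf z \<bullet> v) \<le> e * (norm v)\<^sup>2" for v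
      proof -
        have "v \<bullet> (sym_vee \<xi> (Qf z) *v v) \<le> v \<bullet> (((norm z)\<^sup>2 *\<^sub>R T z) *v v)"
          using elim(1) unfolding qf_le_def by blast
        also have "\<dots> = (norm z)\<^sup>2 * (v \<bullet> (T z *v v))" by (rule smat_quad)
        also have "\<dots> \<le> (norm z)\<^sup>2 * (t z * (norm v)\<^sup>2)"
          unfolding t_def by (intro mult_left_mono quad_bound) simp
        finally show ?thesis unfolding e_def vee_quad by (simp add: mult_ac)
      qed
      have "\<xi> \<bullet> Qf z \<le> - ((norm (Qf z - (\<xi> \<bullet> Qf z) *\<^sub>R \<xi>))\<^sup>2 / K) + K"
        by (rule bwd[OF assms(4) Kpos e4 e0 hv])
      then show ?case unfolding K_def perp_apply .
    qed
    then show ?R using sig unfolding Qf_def Let_def by blast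
  }
  {
    assume ?R
    then obtain \<sigma> :: "real \<Rightarrow> real" and \<sigma>' \<sigma>'' where
      spos: "\<forall>t>0. \<sigma> t > 0" and
      sd: "\<forall>t>0. (\<sigma> has_real_derivative \<sigma>' t) (at t)" and
      slim: "(\<sigma> \<longlongrightarrow> 0) (at_right 0)" and
      sev: "\<forall>\<^sub>F z in at 0. \<xi> \<bullet> Qf z \<le> - ((norm (perp_mat \<xi> *v Qf z))\<^sup>2 / (\<sigma> (norm z) * (norm z)\<^sup>2))
                     + \<sigma> (norm z) * (norm z)\<^sup>2"
      unfolding Qf_def Let_def by blast
    have sc: "continuous_on {0<..} \<sigma>"
      by (rule continuous_at_imp_continuous_on) (use sd DERIV_isCont in auto)
    define T where "T = (\<lambda>z::real^'n. \<sigma> (norm z) *\<^sub>R (mat 1 :: real^'N^'N))"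
    have c1: "continuous_on (UNIV - {0}) (\<lambda>z::real^'n. \<sigma> (norm z))"
      by (rule continuous_on_compose2[OF sc]) (auto intro: continuous_intros)
    have Tc: "continuous_on (UNIV - {0}) T" unfolding T_def
      by (intro continuous_on_scaleR c1 continuous_on_const)
    have Tt: "\<forall>y. y \<noteq> 0 \<longrightarrow> transpose (T y) = T y"
      unfolding T_def by (simp add: transpose_def mat_def vec_eq_iff)
    have nlim: "filterlim (\<lambda>z::real^'n. norm z) (at_right 0) (at 0)"
    proof (subst filterlim_at, intro conjI)
      show "\<forall>\<^sub>F z in at (0::real^'n). norm z \<in> {0<..} \<and> norm z \<noteq> 0"
        using nz by eventually_elim simp
      show "((\<lambda>z::real^'n. norm z) \<longlongrightarrow> 0) (at 0)"
        by (rule tendsto_norm_zero[OF tendsto_ident_at])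
    qed
    have "((\<lambda>z::real^'n. \<sigma> (norm z)) \<longlongrightarrow> 0) (at 0)"
      by (rule filterlim_compose[OF slim nlim])
    then have Tlim: "(T \<longlongrightarrow> 0) (at 0)" unfolding T_def
      using tendsto_scaleR[OF _ tendsto_const, of _ 0 _ "mat 1 :: real^'N^'N"] by simp
    have ev0: "\<forall>\<^sub>F z in at 0. qf_le (sym_vee \<xi> (Qf z)) ((norm z)\<^sup>2 *\<^sub>R T z)"
      using sev nz
    proof eventually_elim
      case (elim z)
      define K where "K = \<sigma> (norm z) * (norm z)\<^sup>2"
      have Kpos: "K > 0" unfolding K_def using spos elim by simp
      have h: "\<xi> \<bullet> Qf z \<le> - ((norm (Qf z - (\<xi> \<bullet> Qf z) *\<^sub>R \<xi>))\<^sup>2 / K) + K"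
        using elim(1) unfolding K_def perp_apply .
      show ?case unfolding qf_le_def
      proof
        fix v
        have "v \<bullet> (sym_vee \<xi> (Qf z) *v v) = (\<xi> \<bullet> v) * (Qf z \<bullet> v)" by (rule vee_quad)
        also have "\<dots> \<le> K * (norm v)\<^sup>2" by (rule fwd[OF assms(4) Kpos h])
        also have "\<dots> = v \<bullet> (((norm z)\<^sup>2 *\<^sub>R T z) *v v)"
          unfolding T_def K_def by (simp add: id_quad mult_ac)
        finally show "v \<bullet> (sym_vee \<xi> (Qf z) *v v) \<le> v \<bullet> (((norm z)\<^sup>2 *\<^sub>R T z) *v v)" .
      qed
    qed
    have ev: "\<forall>\<^sub>F z in at x.
         qf_le (sym_vee \<xi> (u z - u x - P *v (z - x) - (1/2) *\<^sub>R tensor_quad X (z - x)))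
               ((norm (z - x))\<^sup>2 *\<^sub>R T (z - x))"
      using ev0 unfolding at_to_0[of x] eventually_filtermap Qf_def by simp
    show ?L unfolding contact_jet2_def using Tc Tt Tlim ev by blast
  }
qed

end
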